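(* Let $\gamma:\mathrm{Cl}(V,h)\to\mathrm{End}_\mathbb{C}(S)$ be a weakly-faithful complex Clifford representation. Then the complex Lipschitz group $\mathrm{L}_\gamma$ is canonically isomorphic to the automorphism group of $\gamma$ in the category $\mathrm{\mathbb{C}lRep}_w$, via $(\varphi_0,\varphi)\mapsto\varphi$. In particular, the isomorphism class of the group $\mathrm{L}_\gamma$ depends only on the isomorphism class of $\gamma$ in $\mathrm{\mathbb{C}lRep}_w$.
   Context: $(V,h)$ is a finite-dimensional real vector space with non-degenerate symmetric bilinear form, $\mathrm{Cl}(V,h)$ its real Clifford algebra; an isometry $\varphi_0$ induces the unital algebra morphism $\mathrm{Cl}(\varphi_0)$ extending it. A complex Clifford representation is a unital real-algebra morphism $\gamma:\mathrm{Cl}(V,h)\to\mathrm{End}_\mathbb{C}(S)$, $S$ a finite-dimensional complex vector space; weakly-faithful means $\gamma|_V$ injective. A morphism of complex Clifford representations $\gamma\to\gamma'$ (with $\gamma':\mathrm{Cl}(V',h')\to\mathrm{End}_\mathbb{C}(S')$) is a pair $(\varphi_0,\varphi)$, $\varphi_0:(V,h)\to(V',h')$ an isometry and $\varphi:S\to S'$ $\mathbb{C}$-linear, with $\gamma'(\mathrm{Cl}(\varphi_0)(x))\circ\varphi=\varphi\circ\gamma(x)$ for all $x$; composition is componentwise. $\mathrm{\mathbb{C}lRep}_w$ is the category of weakly-faithful complex Clifford representations with these morphisms; an automorphism of $\gamma$ is an isomorphism $\gamma\to\gamma$ (with $\varphi_0\in\mathrm{O}(V,h)$ not necessarily the identity).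 The complex Lipschitz group is $\mathrm{L}_\gamma=\{\varphi\in\mathrm{Aut}_\mathbb{C}(S)\,|\,\varphi\gamma(V)\varphi^{-1}=\gamma(V)\}$. *)

theory Defs
  imports "HOL-Analysis.Analysis"
begin

text \<open>
The quadratic space (V,h) is a finite-dimensional real vector space,
modelled by a type 'v of class euclidean_space, with a form h.  The complex spinor
space S is complex^'n for a finite index type 'n, so End_C(S) = complex^'n^'n and
C-linear maps S -> S' are matrices complex^'n^'n2.  By the universal property of the
Clifford algebra, a unital real-algebra morphism Cl(V,h) -> End_C(S) is the same as
its restriction to V: a real-linear map g with g(v)^2 = h(v,v) id.
\<close>

definition quad_space :: "('v::real_vector \<Rightarrow> 'v \<Rightarrow> real) \<Rightarrow> bool" where
  "quad_space h \<longleftrightarrow> bilinear h \<and> (\<forall>u v. h u v = h v u)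
      \<and> (\<forall>u. (\<forall>v. h u v = 0) \<longrightarrow> u = 0)"

definition clifford_rep ::
  "('v::real_vector \<Rightarrow> 'v \<Rightarrow> real) \<Rightarrow> ('v \<Rightarrow> complex^'n::finite^'n) \<Rightarrow> bool" where
  "clifford_rep h g \<longleftrightarrow> linear g \<and> (\<forall>v. g v ** g v = h v v *\<^sub>R mat 1)"

definition weakly_faithful ::
  "('v::real_vector \<Rightarrow> 'v \<Rightarrow> real) \<Rightarrow> ('v \<Rightarrow> complex^'n::finite^'n) \<Rightarrow> bool" where
  "weakly_faithful h g \<longleftrightarrow> clifford_rep h g \<and> inj g"

definition isometry ::
  "('v::real_vector \<Rightarrow> 'v \<Rightarrow> real) \<Rightarrow> ('w::real_vector \<Rightarrow> 'w \<Rightarrow> real) \<Rightarrow> ('v \<Rightarrow> 'w) \<Rightarrow> bool" where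
  "isometry h h' f \<longleftrightarrow> linear f \<and> (\<forall>u v. h' (f u) (f v) = h u v)"

text \<open>The
intertwining condition is imposed on generators v in V, which is equivalent to
imposing it on all of Cl(V,h) (the set where it holds is a unital subalgebra).\<close>

definition clrep_mor ::
  "('v::real_vector \<Rightarrow> 'v \<Rightarrow> real) \<Rightarrow> ('v \<Rightarrow> complex^'n::finite^'n)
   \<Rightarrow> ('w::real_vector \<Rightarrow> 'w \<Rightarrow> real) \<Rightarrow> ('w \<Rightarrow> complex^'m::finite^'m)
   \<Rightarrow> ('v \<Rightarrow> 'w) \<times> (complex^'n^'m) \<Rightarrow> bool" where
  "clrep_mor h g h' g' a \<longleftrightarrow> isometry h h' (fst a)
      \<and> (\<forall>v. g' (fst a v) ** snd a = snd a ** g v)"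

definition clrep_comp ::
  "('w \<Rightarrow> 'u) \<times> (complex^'m::finite^'k::finite) \<Rightarrow> ('v \<Rightarrow> 'w) \<times> (complex^'n::finite^'m)
   \<Rightarrow> ('v \<Rightarrow> 'u) \<times> (complex^'n^'k)" where
  "clrep_comp b a = (fst b \<circ> fst a, snd b ** snd a)"

definition clrep_id :: "('v \<Rightarrow> 'v) \<times> (complex^'n::finite^'n)" where
  "clrep_id = (id, mat 1)"

definition clrep_iso ::
  "('v::real_vector \<Rightarrow> 'v \<Rightarrow> real) \<Rightarrow> ('v \<Rightarrow> complex^'n::finite^'n)
   \<Rightarrow> ('w::real_vector \<Rightarrow> 'w \<Rightarrow> real) \<Rightarrow> ('w \<Rightarrow> complex^'m::finite^'m)
   \<Rightarrow> ('v \<Rightarrow> 'w) \<times> (complex^'n^'m) \<Rightarrow> bool" where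
  "clrep_iso h g h' g' a \<longleftrightarrow> clrep_mor h g h' g' a
      \<and> (\<exists>b. clrep_mor h' g' h g b \<and> clrep_comp b a = clrep_id \<and> clrep_comp a b = clrep_id)"

definition clrep_Aut ::
  "('v::real_vector \<Rightarrow> 'v \<Rightarrow> real) \<Rightarrow> ('v \<Rightarrow> complex^'n::finite^'n)
   \<Rightarrow> (('v \<Rightarrow> 'v) \<times> (complex^'n^'n)) set" where
  "clrep_Aut h g = {a. clrep_iso h g h g a}"

definition lipschitz_group :: "('v \<Rightarrow> complex^'n::finite^'n) \<Rightarrow> (complex^'n^'n) set" where
  "lipschitz_group g = {p. invertible p \<and> (\<lambda>v. p ** g v ** matrix_inv p) ` UNIV = range g}"

end

theory Submission
  imports Defs
begin

lemma mm_rdistrib: "((A + B) ** C) = (A ** C) + (B ** C)"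
  by (vector matrix_matrix_mult_def sum.distrib[symmetric] field_simps)

lemma mm_scaleR_left: "((c *\<^sub>R A) ** (B::complex^'n^'m)) = c *\<^sub>R (A ** B)"
  by (vector matrix_matrix_mult_def scaleR_sum_right)

lemma mm_scaleR_right: "(A ** (c *\<^sub>R (B::complex^'n^'m))) = c *\<^sub>R (A ** B)"
  by (vector matrix_matrix_mult_def scaleR_sum_right)

lemma mat1_nz: "(mat 1 :: complex^'n^'n) \<noteq> 0"
proof
  assume "(mat 1 :: complex^'n^'n) = 0"
  then have "(mat 1 :: complex^'n^'n) $ undefined $ undefined = 0" by simp
  then show False by (simp add: mat_def)
qed

lemma matrix_inv_eq:
  fixes p q :: "complex^'n^'n"
  assumes "p ** q = mat 1" "q ** p = mat 1"
  shows "matrix_inv p = q"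
proof -
  have "p ** matrix_inv p = mat 1 \<and> matrix_inv p ** p = mat 1"
    unfolding matrix_inv_def by (rule someI[of _ q]) (use assms in auto)
  then have "matrix_inv p = (q ** p) ** matrix_inv p" using assms by simp
  also have "\<dots> = q" using \<open>p ** matrix_inv p = mat 1 \<and> _\<close>
    by (metis matrix_mul_assoc matrix_mul_rid)
  finally show ?thesis .
qed

lemma polar:
  assumes qs: "quad_space h" and lf: "linear f"
    and sq: "\<And>v. h (f v) (f v) = h v v"
  shows "h (f u) (f v) = h u v"
proof -
  have b: "bilinear h" and s: "\<And>u v. h u v = h v u" using qs unfolding quad_space_def by auto
  have e: "\<And>x y. h (x + y) (x + y) = h x x + 2 * h x y + h y y"
    using b s unfolding bilinear_def by (simp add: linear_add)
  have "h (f (u + v)) (f (u + v)) = h (u + v) (u + v)" by (rule sq)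
  then have "h (f u + f v) (f u + f v) = h (u + v) (u + v)" using lf by (simp add: linear_add)
  then show ?thesis unfolding e using sq[of u] sq[of v] by simp
qed

lemma conj_mor:
  fixes g :: "'v::real_vector \<Rightarrow> complex^'n::finite^'n"
  assumes qs: "quad_space h" and cr: "clifford_rep h g" and ig: "inj g"
    and pq: "p ** q = mat 1" and qp: "q ** p = mat 1"
    and rng: "\<And>v. p ** g v ** q \<in> range g"
  shows "clrep_mor h g h g (inv g \<circ> (\<lambda>v. p ** g v ** q), p)"
    and "\<And>v. g ((inv g \<circ> (\<lambda>v. p ** g v ** q)) v) = p ** g v ** q"
proof -
  define f where "f = inv g \<circ> (\<lambda>v. p ** g v ** q)"
  have gf: "\<And>v. g (f v) = p ** g v ** q"
    unfolding f_def using rng by (simp add: f_inv_into_f)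
  then show "\<And>v. g ((inv g \<circ> (\<lambda>v. p ** g v ** q)) v) = p ** g v ** q"
    unfolding f_def .
  have lg: "linear g" and sqg: "\<And>v. g v ** g v = h v v *\<^sub>R mat 1"
    using cr unfolding clifford_rep_def by auto
  have lf: "linear f"
  proof (rule linearI)
    fix x y
    have "g (f (x + y)) = g (f x + f y)"
      unfolding gf using lg by (simp add: gf linear_add mm_rdistrib matrix_add_ldistrib)
    then show "f (x + y) = f x + f y" using ig by (simp add: inj_eq)
  next
    fix c x
    have "g (f (c *\<^sub>R x)) = g (c *\<^sub>R f x)"
      unfolding gf using lg by (simp add: gf linear_scale mm_scaleR_left mm_scaleR_right)
    then show "f (c *\<^sub>R x) = c *\<^sub>R f x" using ig by (simp add: inj_eq)
  qed
  have sq: "h (f v) (f v) = h v v" for v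
  proof -
    have "h (f v) (f v) *\<^sub>R (mat 1 :: complex^'n^'n) = g (f v) ** g (f v)" using sqg by simp
    also have "\<dots> = p ** (g v ** (q ** p) ** g v) ** q" unfolding gf
      by (simp add: matrix_mul_assoc)
    also have "\<dots> = h v v *\<^sub>R mat 1" using qp pq sqg
      by (simp add: mm_scaleR_left mm_scaleR_right)
    finally show ?thesis using mat1_nz[where 'n='n] scaleR_cancel_right by metis
  qed
  have "g (f v) ** p = p ** g v" for v
    unfolding gf by (metis qp matrix_mul_assoc matrix_mul_rid)
  then show "clrep_mor h g h g (inv g \<circ> (\<lambda>v. p ** g v ** q), p)"
    unfolding clrep_mor_def isometry_def f_def[symmetric]
    using lf polar[OF qs lf sq] by simp
qed


lemma transport:
  fixes g :: "'v::real_vector \<Rightarrow> complex^'n::finite^'n"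
    and g' :: "'w::real_vector \<Rightarrow> complex^'m::finite^'m"
  assumes m1: "\<And>v. g' (fa v) ** q = q ** g v"
    and fi: "\<And>w. fa (fb w) = w"
    and rq: "r ** q = mat 1" and qr: "q ** r = mat 1"
    and x: "x \<in> lipschitz_group g"
  shows "q ** x ** r \<in> lipschitz_group g'"
proof -
  define xi where "xi = matrix_inv x"
  have ix: "invertible x" and img: "(\<lambda>v. x ** g v ** xi) ` UNIV = range g"
    using x unfolding lipschitz_group_def xi_def by auto
  have xx: "x ** xi = mat 1" "xi ** x = mat 1"
    using ix unfolding xi_def invertible_def matrix_inv_def by (metis (mono_tags, lifting) someI)+
  have inv1: "(q ** x ** r) ** (q ** xi ** r) = mat 1"
    by (metis xx(1) rq qr matrix_mul_assoc matrix_mul_rid)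
  have inv2: "(q ** xi ** r) ** (q ** x ** r) = mat 1"
    by (metis xx(2) rq qr matrix_mul_assoc matrix_mul_rid)
  have mi: "matrix_inv (q ** x ** r) = q ** xi ** r"
    by (rule matrix_inv_eq[OF inv1 inv2])
  have gr: "r ** g' (fa v) = g v ** r" for v
  proof -
    have "r ** g' (fa v) = r ** (g' (fa v) ** q) ** r"
      by (metis qr matrix_mul_assoc matrix_mul_rid)
    also have "\<dots> = g v ** r" unfolding m1
      by (metis rq matrix_mul_assoc matrix_mul_lid)
    finally show ?thesis .
  qed
  have gq: "q ** g v ** r = g' (fa v)" for v
    by (metis m1 qr matrix_mul_assoc matrix_mul_rid)
  have key: "(q ** x ** r) ** g' (fa v) ** (q ** xi ** r) = q ** (x ** g v ** xi) ** r" for v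
  proof -
    have "(q ** x ** r) ** g' (fa v) ** (q ** xi ** r) = q ** x ** (r ** g' (fa v)) ** q ** xi ** r"
      by (simp add: matrix_mul_assoc)
    also have "\<dots> = q ** x ** g v ** (r ** q) ** xi ** r" unfolding gr
      by (simp add: matrix_mul_assoc)
    also have "\<dots> = q ** (x ** g v ** xi) ** r" using rq by (simp add: matrix_mul_assoc)
    finally show ?thesis .
  qed
  have "(\<lambda>w. (q ** x ** r) ** g' w ** (q ** xi ** r)) ` UNIV = range g'"
  proof (intro set_eqI iffI)
    fix y assume "y \<in> (\<lambda>w. (q ** x ** r) ** g' w ** (q ** xi ** r)) ` UNIV"
    then obtain w where y: "y = (q ** x ** r) ** g' w ** (q ** xi ** r)" by auto
    have "x ** g (fb w) ** xi \<in> range g" using img by blast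
    then obtain u where u: "x ** g (fb w) ** xi = g u" by auto
    have "y = q ** g u ** r" using key[of "fb w"] unfolding y fi u .
    then show "y \<in> range g'" using gq by auto
  next
    fix y assume "y \<in> range g'"
    then obtain w where y: "y = g' w" by auto
    have "g (fb w) \<in> (\<lambda>v. x ** g v ** xi) ` UNIV" using img by blast
    then obtain u where u: "g (fb w) = x ** g u ** xi" by auto
    have "y = q ** g (fb w) ** r" using gq[of "fb w"] fi y by simp
    also have "\<dots> = (q ** x ** r) ** g' (fa u) ** (q ** xi ** r)" using key[of u] u by simp
    finally show "y \<in> (\<lambda>w. (q ** x ** r) ** g' w ** (q ** xi ** r)) ` UNIV" by auto
  qed
  moreover have "invertible (q ** x ** r)" using inv1 inv2 invertible_def by blast
  ultimately show ?thesis unfolding lipschitz_group_def using mi by simp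
qed


lemma iso_unpack:
  assumes "clrep_iso h g h' g' a"
  obtains b where "clrep_mor h g h' g' a" "clrep_mor h' g' h g b"
    "fst b \<circ> fst a = id" "snd b ** snd a = mat 1" "fst a \<circ> fst b = id" "snd a ** snd b = mat 1"
  using assms unfolding clrep_iso_def clrep_comp_def clrep_id_def by auto

lemma mor_comp:
  assumes "clrep_mor h g h g a" "clrep_mor h g h g b"
  shows "clrep_mor h g h g (clrep_comp a b)"
proof -
  have "linear (fst a \<circ> fst b)" using assms unfolding clrep_mor_def isometry_def
    by (auto intro: linear_compose)
  moreover have "h (fst a (fst b u)) (fst a (fst b v)) = h u v" for u v
    using assms unfolding clrep_mor_def isometry_def by auto
  moreover have "g (fst a (fst b v)) ** (snd a ** snd b) = snd a ** snd b ** g v" for v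
  proof -
    have "g (fst a (fst b v)) ** (snd a ** snd b) = snd a ** g (fst b v) ** snd b"
      using assms(1) unfolding clrep_mor_def by (simp add: matrix_mul_assoc)
    also have "\<dots> = snd a ** snd b ** g v"
      using assms(2) unfolding clrep_mor_def by (simp add: matrix_mul_assoc[symmetric])
    finally show ?thesis .
  qed
  ultimately show ?thesis unfolding clrep_mor_def isometry_def clrep_comp_def by simp
qed

lemma one_lip:
  shows "(mat 1 :: complex^'n::finite^'n) \<in> lipschitz_group g"
proof -
  have "matrix_inv (mat 1 :: complex^'n::finite^'n) = mat 1" by (rule matrix_inv_eq) simp_all
  moreover have "invertible (mat 1 :: complex^'n::finite^'n)" unfolding invertible_def
    by (rule exI[of _ "mat 1"]) simp
  ultimately show ?thesis unfolding lipschitz_group_def by simp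
qed

theorem proposition3p12:
  fixes h :: "'v::euclidean_space \<Rightarrow> 'v \<Rightarrow> real"
    and g :: "'v \<Rightarrow> complex^'n::finite^'n"
    and h' :: "'w::euclidean_space \<Rightarrow> 'w \<Rightarrow> real"
    and g' :: "'w \<Rightarrow> complex^'m::finite^'m"
  assumes "quad_space h" and "weakly_faithful h g"
  shows "bij_betw snd (clrep_Aut h g) (lipschitz_group g)
     \<and> (\<forall>a\<in>clrep_Aut h g. \<forall>b\<in>clrep_Aut h g.
           clrep_comp a b \<in> clrep_Aut h g \<and> snd (clrep_comp a b) = snd a ** snd b)
     \<and> ((quad_space h' \<and> weakly_faithful h' g' \<and> (\<exists>a. clrep_iso h g h' g' a)) \<longrightarrow>
        (\<exists>F. bij_betw F (lipschitz_group g) (lipschitz_group g')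
             \<and> (\<forall>x\<in>lipschitz_group g. \<forall>y\<in>lipschitz_group g. F (x ** y) = F x ** F y)))"
proof (intro conjI)
  have qs: "quad_space h" and cr: "clifford_rep h g" and ig: "inj g"
    using assms unfolding weakly_faithful_def by auto
  show "bij_betw snd (clrep_Aut h g) (lipschitz_group g)"
  proof (rule bij_betw_imageI)
    show "inj_on snd (clrep_Aut h g)"
    proof (rule inj_onI)
      fix a c assume a: "a \<in> clrep_Aut h g" and c: "c \<in> clrep_Aut h g" and e: "snd a = snd c"
      obtain b where "clrep_mor h g h g a" "snd a ** snd b = mat 1"
        using a unfolding clrep_Aut_def by (auto elim: iso_unpack)
      moreover have "clrep_mor h g h g c" using c unfolding clrep_Aut_def clrep_iso_def by auto
      ultimately have "g (fst a v) = g (fst c v)" for v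
        unfolding clrep_mor_def using e
        by (metis matrix_mul_assoc matrix_mul_rid)
      then have "fst a = fst c" using ig by (auto simp: inj_eq)
      then show "a = c" using e by (simp add: prod_eq_iff)
    qed
    show "snd ` clrep_Aut h g = lipschitz_group g"
    proof (intro set_eqI iffI)
      fix p assume "p \<in> snd ` clrep_Aut h g"
      then obtain a where a: "a \<in> clrep_Aut h g" and p: "p = snd a" by auto
      obtain b where m: "clrep_mor h g h g a" and bb:
        "fst a \<circ> fst b = id" "snd b ** snd a = mat 1" "snd a ** snd b = mat 1"
        using a unfolding clrep_Aut_def by (auto elim: iso_unpack)
      have mi: "matrix_inv (snd a) = snd b" using bb by (intro matrix_inv_eq) auto
      have gp: "snd a ** g v ** snd b = g (fst a v)" for v
        using m bb unfolding clrep_mor_def by (metis matrix_mul_assoc matrix_mul_rid)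
      have "range (\<lambda>v. g (fst a v)) = range g"
      proof (intro set_eqI iffI)
        fix y assume "y \<in> range g"
        then obtain w where "y = g w" by auto
        then have "y = g (fst a (fst b w))" using bb(1) by (simp add: fun_eq_iff)
        then show "y \<in> range (\<lambda>v. g (fst a v))" by blast
      qed auto
      moreover have "invertible (snd a)" using bb invertible_def by blast
      ultimately show "p \<in> lipschitz_group g" using p unfolding lipschitz_group_def
        using mi gp by simp
    next
      fix p assume pL: "p \<in> lipschitz_group g"
      define q where "q = matrix_inv p"
      have ip: "invertible p" and img: "(\<lambda>v. p ** g v ** q) ` UNIV = range g"
        using pL unfolding lipschitz_group_def q_def by auto
      have pq: "p ** q = mat 1" "q ** p = mat 1"
        using ip unfolding q_def invertible_def matrix_inv_def by (metis (mono_tags, lifting) someI)+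
      have r1: "p ** g v ** q \<in> range g" for v using img by blast
      have r2: "q ** g v ** p \<in> range g" for v
      proof -
        have "g v \<in> (\<lambda>v. p ** g v ** q) ` UNIV" using img by blast
        then obtain u where "g v = p ** g u ** q" by auto
        then have "q ** g v ** p = (q ** p) ** g u ** (q ** p)" by (simp add: matrix_mul_assoc)
        then show ?thesis using pq by simp
      qed
      define f where "f = inv g \<circ> (\<lambda>v. p ** g v ** q)"
      define f' where "f' = inv g \<circ> (\<lambda>v. q ** g v ** p)"
      have m1: "clrep_mor h g h g (f, p)" and gf: "\<And>v. g (f v) = p ** g v ** q"
        using conj_mor[OF qs cr ig pq(1) pq(2) r1] unfolding f_def by auto
      have m2: "clrep_mor h g h g (f', q)" and gf': "\<And>v. g (f' v) = q ** g v ** p"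
        using conj_mor[OF qs cr ig pq(2) pq(1) r2] unfolding f'_def by auto
      have "g (f' (f v)) = g v" for v unfolding gf gf'
        using pq by (metis matrix_mul_assoc matrix_mul_lid matrix_mul_rid)
      then have c1: "f' \<circ> f = id" using ig by (auto simp: inj_eq fun_eq_iff)
      have "g (f (f' v)) = g v" for v unfolding gf gf'
        using pq by (metis matrix_mul_assoc matrix_mul_lid matrix_mul_rid)
      then have c2: "f \<circ> f' = id" using ig by (auto simp: inj_eq fun_eq_iff)
      have "(f, p) \<in> clrep_Aut h g" unfolding clrep_Aut_def clrep_iso_def
        using m1 m2 c1 c2 pq by (auto simp: clrep_comp_def clrep_id_def intro!: exI[of _ "(f', q)"])
      then show "p \<in> snd ` clrep_Aut h g" by force
    qed
  qed
  show "\<forall>a\<in>clrep_Aut h g. \<forall>b\<in>clrep_Aut h g.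
           clrep_comp a b \<in> clrep_Aut h g \<and> snd (clrep_comp a b) = snd a ** snd b"
  proof (intro ballI conjI)
    fix a b assume a: "a \<in> clrep_Aut h g" and b: "b \<in> clrep_Aut h g"
    show "snd (clrep_comp a b) = snd a ** snd b" by (simp add: clrep_comp_def)
    obtain a' where A: "clrep_mor h g h g a" "clrep_mor h g h g a'"
      "fst a' \<circ> fst a = id" "snd a' ** snd a = mat 1" "fst a \<circ> fst a' = id" "snd a ** snd a' = mat 1"
      using a unfolding clrep_Aut_def by (auto elim: iso_unpack)
    obtain b' where B: "clrep_mor h g h g b" "clrep_mor h g h g b'"
      "fst b' \<circ> fst b = id" "snd b' ** snd b = mat 1" "fst b \<circ> fst b' = id" "snd b ** snd b' = mat 1"
      using b unfolding clrep_Aut_def by (auto elim: iso_unpack)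
    have e1: "clrep_comp (clrep_comp b' a') (clrep_comp a b) = clrep_id"
      using A B unfolding clrep_comp_def clrep_id_def
      by (simp add: fun_eq_iff pointfree_idE matrix_mul_assoc)
        (metis matrix_mul_assoc matrix_mul_lid)
    have e2: "clrep_comp (clrep_comp a b) (clrep_comp b' a') = clrep_id"
      using A B unfolding clrep_comp_def clrep_id_def
      by (simp add: fun_eq_iff pointfree_idE matrix_mul_assoc)
        (metis matrix_mul_assoc matrix_mul_lid)
    show "clrep_comp a b \<in> clrep_Aut h g"
      unfolding clrep_Aut_def clrep_iso_def
      using mor_comp[OF A(1) B(1)] mor_comp[OF B(2) A(2)] e1 e2 by blast
  qed
  show "(quad_space h' \<and> weakly_faithful h' g' \<and> (\<exists>a. clrep_iso h g h' g' a)) \<longrightarrow>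
        (\<exists>F. bij_betw F (lipschitz_group g) (lipschitz_group g')
             \<and> (\<forall>x\<in>lipschitz_group g. \<forall>y\<in>lipschitz_group g. F (x ** y) = F x ** F y))"
  proof
    assume "quad_space h' \<and> weakly_faithful h' g' \<and> (\<exists>a. clrep_iso h g h' g' a)"
    then obtain a where "clrep_iso h g h' g' a" by auto
    then obtain b where A: "clrep_mor h g h' g' a" "clrep_mor h' g' h g b"
      "fst b \<circ> fst a = id" "snd b ** snd a = mat 1" "fst a \<circ> fst b = id" "snd a ** snd b = mat 1"
      by (auto elim: iso_unpack)
    define q where "q = snd a"
    define r where "r = snd b"
    have t1: "q ** x ** r \<in> lipschitz_group g'" if "x \<in> lipschitz_group g" for x
      using A that unfolding q_def r_def
      by (intro transport[where fa="fst a" and fb="fst b" and g=g and g'=g'])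
        (auto simp: clrep_mor_def fun_eq_iff)
    have t2: "r ** y ** q \<in> lipschitz_group g" if "y \<in> lipschitz_group g'" for y
      using A that unfolding q_def r_def
      by (intro transport[where fa="fst b" and fb="fst a" and g=g' and g'=g])
        (auto simp: clrep_mor_def fun_eq_iff)
    have rq: "r ** q = mat 1" and qr: "q ** r = mat 1" using A q_def r_def by auto
    show "\<exists>F. bij_betw F (lipschitz_group g) (lipschitz_group g')
             \<and> (\<forall>x\<in>lipschitz_group g. \<forall>y\<in>lipschitz_group g. F (x ** y) = F x ** F y)"
    proof (intro exI conjI ballI)
      show "bij_betw (\<lambda>x. q ** x ** r) (lipschitz_group g) (lipschitz_group g')"
      proof (rule bij_betwI[where g="\<lambda>y. r ** y ** q"])
        show "(\<lambda>x. q ** x ** r) \<in> lipschitz_group g \<rightarrow> lipschitz_group g'" using t1 by auto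
        show "(\<lambda>y. r ** y ** q) \<in> lipschitz_group g' \<rightarrow> lipschitz_group g" using t2 by auto
        show "r ** (q ** x ** r) ** q = x" for x
          using rq by (metis matrix_mul_assoc matrix_mul_lid matrix_mul_rid)
        show "q ** (r ** y ** q) ** r = y" for y
          using qr by (metis matrix_mul_assoc matrix_mul_lid matrix_mul_rid)
      qed
      show "q ** (x ** y) ** r = (q ** x ** r) ** (q ** y ** r)" for x y
      proof -
        have "(q ** x ** r) ** (q ** y ** r) = q ** x ** (r ** q) ** y ** r"
          by (simp add: matrix_mul_assoc)
        then show ?thesis using rq by (metis matrix_mul_assoc matrix_mul_lid matrix_mul_rid)
      qed
    qed
  qed
qed

end
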